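(* For any $\epsilon>0$ and $N$ sufficiently large, there exists $\delta\in(0,\epsilon)$ such that for all $\bm\sigma\in S_N^n$ and $\bm\omega\in(\mathbb{R}^M)^n$ for which $\Psi(\bm\sigma,\bm\omega)$ is defined, $$\mathbf 1_{Q^\epsilon_{M+N}}\big(\Psi(\bm\sigma,\bm\omega)\big)\ge\mathbf 1_{Q^\epsilon_N}(\bm\sigma)\,\mathbf 1_{\Omega^{\epsilon/2,\delta}_M}(\bm\omega).$$
   Context: $n\ge1$, $M\ge1$ fixed. $S_K$ = sphere of radius $\sqrt K$ in $\mathbb{R}^K$. Overlap of $\bm\sigma,\bm\sigma'\in(\mathbb{R}^K)^n$: $\bm R(\bm\sigma,\bm\sigma')=(\frac1K\sum_{i\le K}\sigma_i(j)\sigma'_i(j'))_{j,j'\le n}$. $\bm Q$ is a symmetric positive semidefinite $n\times n$ matrix with unit diagonal; $Q^\epsilon_K=\{\bm\sigma\in S_K^n:\|\bm R(\bm\sigma,\bm\sigma)-\bm Q\|_\infty\le\epsilon\}$ (max-entry norm). For $\bm\omega(j)\in\mathbb{R}^M$ write $\bm\omega(j)=s_j\bm\tau(j)$ with $s_j=\|\bm\omega(j)\|/\sqrt M$ and $\bm\tau(j)\in S_M$; $\Omega^{\epsilon/2,\delta}_M=\{(s_j\bm\tau(j))_{j\le n}:\bm\tau\in Q^{\epsilon/2}_M,\ s_j\in[\sqrt{1-\delta},\sqrt{1+\delta}]\ \forall j\}$. For $\bm x\in\mathbb{R}^M$, $a_1(\bm x)=1$ and $a_\ell(\bm x)=\prod_{j=1}^{\ell-1}\sqrt{1+\frac{1-x_j^2}{M+N-j}}$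 for $1<\ell\le M+1$. For $\bm\sigma\in S_N$, $\bm\omega\in\mathbb{R}^M$, $\psi(\bm\sigma,\bm\omega)=(\sigma_1a_{M+1}(\bm\omega),\dots,\sigma_Na_{M+1}(\bm\omega),\omega_1a_1(\bm\omega),\dots,\omega_Ma_M(\bm\omega))$, and $\Psi(\bm\sigma,\bm\omega)=(\psi(\bm\sigma(j),\bm\omega(j)))_{j\le n}$ for $\bm\sigma\in S_N^n$, $\bm\omega\in(\mathbb{R}^M)^n$. *)

theory Defs
  imports "HOL-Analysis.Analysis"
begin

text \<open>Conventions: a vector in R^K is a function nat => real, used on the indices 1..K
  (as in the paper). An n-tuple of vectors is a function nat => nat => real,
  sigma j i = i-th coordinate of the j-th replica, j in 1..n.\<close>

definition on_sphere :: "nat \<Rightarrow> (nat \<Rightarrow> real) \<Rightarrow> bool" where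
  "on_sphere K x \<longleftrightarrow> (\<Sum>i=1..K. (x i)^2) = real K"

definition overlap :: "nat \<Rightarrow> (nat \<Rightarrow> nat \<Rightarrow> real) \<Rightarrow> (nat \<Rightarrow> nat \<Rightarrow> real) \<Rightarrow> nat \<Rightarrow> nat \<Rightarrow> real" where
  "overlap K \<sigma> \<sigma>' j j' = (1 / real K) * (\<Sum>i=1..K. \<sigma> j i * \<sigma>' j' i)"

definition Qset :: "nat \<Rightarrow> nat \<Rightarrow> (nat \<Rightarrow> nat \<Rightarrow> real) \<Rightarrow> real \<Rightarrow> (nat \<Rightarrow> nat \<Rightarrow> real) set" where
  "Qset K n Q eps = {\<sigma>. (\<forall>j\<in>{1..n}. on_sphere K (\<sigma> j)) \<and>
      (\<forall>j\<in>{1..n}. \<forall>j'\<in>{1..n}. \<bar>overlap K \<sigma> \<sigma> j j' - Q j j'\<bar> \<le> eps)}"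

definition Omega_set :: "nat \<Rightarrow> nat \<Rightarrow> (nat \<Rightarrow> nat \<Rightarrow> real) \<Rightarrow> real \<Rightarrow> real \<Rightarrow> (nat \<Rightarrow> nat \<Rightarrow> real) set" where
  "Omega_set M n Q eps' \<delta> = {\<omega>. \<exists>s \<tau>. \<tau> \<in> Qset M n Q eps' \<and>
      (\<forall>j\<in>{1..n}. s j \<in> {sqrt (1 - \<delta>)..sqrt (1 + \<delta>)} \<and> (\<forall>i\<in>{1..M}. \<omega> j i = s j * \<tau> j i))}"

definition a_fun :: "nat \<Rightarrow> nat \<Rightarrow> (nat \<Rightarrow> real) \<Rightarrow> nat \<Rightarrow> real" where
  "a_fun M N x l = (\<Prod>k=1..l-1. sqrt (1 + (1 - (x k)^2) / (real (M + N) - real k)))"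

definition psi :: "nat \<Rightarrow> nat \<Rightarrow> (nat \<Rightarrow> real) \<Rightarrow> (nat \<Rightarrow> real) \<Rightarrow> nat \<Rightarrow> real" where
  "psi M N \<sigma> \<omega> i = (if i \<le> N then \<sigma> i * a_fun M N \<omega> (M + 1)
                      else \<omega> (i - N) * a_fun M N \<omega> (i - N))"

definition Psi :: "nat \<Rightarrow> nat \<Rightarrow> (nat \<Rightarrow> nat \<Rightarrow> real) \<Rightarrow> (nat \<Rightarrow> nat \<Rightarrow> real) \<Rightarrow> nat \<Rightarrow> nat \<Rightarrow> real" where
  "Psi M N \<sigma> \<omega> j = psi M N (\<sigma> j) (\<omega> j)"

text \<open>Psi(sigma, omega) is defined iff all square-root arguments are nonnegative.\<close>
definition Psi_defined :: "nat \<Rightarrow> nat \<Rightarrow> nat \<Rightarrow> (nat \<Rightarrow> nat \<Rightarrow> real) \<Rightarrow> bool" where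
  "Psi_defined M N n \<omega> \<longleftrightarrow> (\<forall>j\<in>{1..n}. \<forall>k\<in>{1..M}.
      0 \<le> 1 + (1 - (\<omega> j k)^2) / (real (M + N) - real k))"

end

theory Submission
  imports Defs
begin

definition AA :: "nat \<Rightarrow> nat \<Rightarrow> (nat \<Rightarrow> real) \<Rightarrow> nat \<Rightarrow> real" where
  "AA M N x l = (\<Prod>k=1..l-1. 1 + (1 - (x k)^2) / (real (M + N) - real k))"

lemma sqrt_prod_gen: "finite K \<Longrightarrow> sqrt (\<Prod>k\<in>K. f k) = (\<Prod>k\<in>K. sqrt (f k))"
  by (induction K rule: finite_induct) (auto simp: real_sqrt_mult)

lemma a_fun_AA: "a_fun M N x l = sqrt (AA M N x l)"
  unfolding a_fun_def AA_def by (simp add: sqrt_prod_gen)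

lemma prod_dev:
  fixes t :: real
  assumes "finite K" "\<forall>k\<in>K. \<bar>f k\<bar> \<le> t"
  shows "\<bar>(\<Prod>k\<in>K. 1 + f k) - 1\<bar> \<le> (1+t)^card K - 1"
  using assms
proof (induction K rule: finite_induct)
  case empty thus ?case by simp
next
  case (insert a F)
  let ?P = "\<Prod>k\<in>F. 1 + f k"
  have ih: "\<bar>?P - 1\<bar> \<le> (1+t)^card F - 1" using insert by auto
  have fa: "\<bar>f a\<bar> \<le> t" using insert by auto
  hence t0: "t \<ge> 0" by linarith
  have "\<bar>?P\<bar> \<le> (1+t)^card F" using ih by linarith
  hence "\<bar>f a * ?P\<bar> \<le> t * (1+t)^card F"
    by (simp add: abs_mult mult_mono fa t0)
  have "(\<Prod>k\<in>insert a F. 1 + f k) - 1 = (?P - 1) + f a * ?P"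
    using insert by (simp add: algebra_simps)
  hence "\<bar>(\<Prod>k\<in>insert a F. 1 + f k) - 1\<bar> \<le> ((1+t)^card F - 1) + t * (1+t)^card F"
    using ih \<open>\<bar>f a * ?P\<bar> \<le> t * (1+t)^card F\<close> by linarith
  also have "\<dots> = (1+t)^card (insert a F) - 1" using insert by (simp add: algebra_simps)
  finally show ?case .
qed

lemma pow_bound:
  fixes t :: real
  assumes "t \<ge> 0" "real m * t \<le> 1/2"
  shows "(1+t)^m \<le> 1 + 2 * real m * t"
  using assms(2)
proof (induction m)
  case 0 thus ?case by simp
next
  case (Suc m)
  have h: "real m * t \<le> 1/2" using Suc.prems assms(1) by (simp add: algebra_simps) 
  have "(1+t)^Suc m = (1+t)^m * (1+t)" by simp
  also have "\<dots> \<le> (1 + 2 * real m * t) * (1+t)"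
    using Suc.IH[OF h] assms(1) by (intro mult_right_mono) auto
  also have "\<dots> \<le> 1 + 2 * real (Suc m) * t"
  proof -
    have "2 * real m * t * t \<le> t" using h assms(1)
    proof -
      have "2 * real m * t \<le> 1" using h by linarith
      from mult_right_mono[OF this assms(1)] show ?thesis by simp
    qed
    thus ?thesis by (simp add: algebra_simps)
  qed
  finally show ?case .
qed


lemma AA_bound:
  assumes M1: "M \<ge> 1" and NM: "real N \<ge> 2 * real M * (2 * real M + 1)"
    and xb: "\<forall>k\<in>{1..M}. (x k)^2 \<le> 2 * real M" and l: "l \<le> M + 1"
  shows "\<bar>AA M N x l - 1\<bar> \<le> 2 * real M * (2 * real M + 1) / real N"
proof -
  have Npos: "real N > 0" proof -
    have "real M \<ge> 1" using M1 by simp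
    hence "2 * real M * (2 * real M + 1) > 0" by simp
    thus ?thesis using NM by linarith
  qed
  define t where "t = (2 * real M + 1) / real N"
  have t0: "t \<ge> 0" unfolding t_def using Npos by simp
  have tk: "\<forall>k\<in>{1..l-1}. \<bar>(1 - (x k)^2) / (real (M + N) - real k)\<bar> \<le> t"
  proof
    fix k assume k: "k \<in> {1..l-1}"
    hence kM: "k \<le> M" using l by auto
    define dd where "dd = real (M + N) - real k"
    have d: "dd \<ge> real N" using kM unfolding dd_def by simp
    have x2: "(x k)^2 \<le> 2 * real M" using xb k kM by auto
    have x0: "(x k)^2 \<ge> 0" by simp
    have a1: "\<bar>1 - (x k)^2\<bar> \<le> 2 * real M + 1" using x2 x0 by linarith
    have a2: "\<bar>1 - (x k)^2\<bar> / dd \<le> (2 * real M + 1) / real N"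
      using d Npos a1 by (intro frac_le) auto
    have dpos: "dd > 0" using d Npos by linarith
    have "\<bar>(1 - (x k)^2) / dd\<bar> = \<bar>1 - (x k)^2\<bar> / dd"
      using dpos by (simp add: abs_divide)
    thus "\<bar>(1 - (x k)^2) / (real (M + N) - real k)\<bar> \<le> t"
      using a2 unfolding t_def dd_def[symmetric] by linarith
  qed
  have "\<bar>AA M N x l - 1\<bar> \<le> (1+t)^card {1..l-1} - 1"
    unfolding AA_def using prod_dev[OF _ tk] by simp
  also have "\<dots> \<le> (1+t)^M - 1"
    using t0 l by (intro diff_right_mono power_increasing) auto
  also have "\<dots> \<le> 2 * real M * t"
  proof -
    have "real M * t \<le> 1/2" unfolding t_def using NM Npos
      by (simp add: field_simps)
    from pow_bound[OF t0 this] show ?thesis by simp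
  qed
  also have "\<dots> = 2 * real M * (2 * real M + 1) / real N" unfolding t_def by simp
  finally show ?thesis .
qed

lemma AA_Suc: "AA M N x (Suc (Suc L)) = AA M N x (Suc L) * (1 + (1 - (x (Suc L))^2) / (real (M + N) - real (Suc L)))"
  unfolding AA_def by (simp add: prod.cl_ivl_Suc)

lemma sphere_id:
  assumes "N \<ge> 1" "L \<le> M"
  shows "(\<Sum>l=1..L. (x l)^2 * AA M N x l) + (real (M+N) - real L) * AA M N x (L+1) = real (M+N)"
  using assms(2)
proof (induction L)
  case 0 thus ?case by (simp add: AA_def)
next
  case (Suc L)
  have ih: "(\<Sum>l=1..L. (x l)^2 * AA M N x l) + (real (M+N) - real L) * AA M N x (Suc L) = real (M+N)"
    using Suc by simp
  have d: "real (M + N) - real (Suc L) \<noteq> 0" using Suc.prems assms(1) by simp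
  have "(real (M+N) - real (Suc L)) * AA M N x (Suc (Suc L))
     = AA M N x (Suc L) * ((real (M+N) - real (Suc L)) + (1 - (x (Suc L))^2))"
    unfolding AA_Suc using d by (simp add: field_simps)
  also have "\<dots> = (real (M+N) - real L) * AA M N x (Suc L) - (x (Suc L))^2 * AA M N x (Suc L)"
    by (simp add: algebra_simps)
  finally show ?case using ih by (simp add: sum.cl_ivl_Suc)
qed

lemma inner_split:
  "(\<Sum>i=1..M+N. psi M N s w i * psi M N s' w' i)
   = a_fun M N w (M+1) * a_fun M N w' (M+1) * (\<Sum>i=1..N. s i * s' i)
     + (\<Sum>l=1..M. w l * w' l * (a_fun M N w l * a_fun M N w' l))"
proof -
  have "(\<Sum>i=1..N+M. psi M N s w i * psi M N s' w' i)
     = (\<Sum>i=1..N. psi M N s w i * psi M N s' w' i) + (\<Sum>i=N+1..N+M. psi M N s w i * psi M N s' w' i)"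
    by (rule sum.ub_add_nat) simp
  moreover have "(\<Sum>i=1..N. psi M N s w i * psi M N s' w' i)
     = a_fun M N w (M+1) * a_fun M N w' (M+1) * (\<Sum>i=1..N. s i * s' i)"
    by (simp add: psi_def sum_distrib_left algebra_simps)
  moreover have "(\<Sum>i=N+1..N+M. psi M N s w i * psi M N s' w' i)
     = (\<Sum>l=1..M. w l * w' l * (a_fun M N w l * a_fun M N w' l))"
  proof -
    have "(\<Sum>i=N+1..N+M. psi M N s w i * psi M N s' w' i) = (\<Sum>i=1+N..M+N. psi M N s w i * psi M N s' w' i)"
      by (simp add: add.commute)
    also have "\<dots> = (\<Sum>i=1..M. psi M N s w (i+N) * psi M N s' w' (i+N))"
      by (rule sum.shift_bounds_cl_nat_ivl)
    also have "\<dots> = (\<Sum>l=1..M. w l * w' l * (a_fun M N w l * a_fun M N w' l))"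
      by (intro sum.cong) (auto simp: psi_def)
    finally show ?thesis .
  qed
  ultimately show ?thesis by (simp add: add.commute)
qed


lemma sqrt_dev: "(y::real) \<ge> 0 \<Longrightarrow> \<bar>sqrt y - 1\<bar> \<le> \<bar>y - 1\<bar>"
proof -
  assume y: "y \<ge> 0"
  have e: "y - 1 = (sqrt y - 1) * (sqrt y + 1)" using y by (simp add: algebra_simps)
  have "\<bar>sqrt y - 1\<bar> \<le> \<bar>sqrt y - 1\<bar> * (sqrt y + 1)"
    using y by (simp add: mult_le_cancel_left1)
  also have "\<dots> = \<bar>y - 1\<bar>" using e y by (simp add: abs_mult)
  finally show ?thesis .
qed

lemma sqrt_pair_dev:
  fixes A B e :: real
  assumes "\<bar>A - 1\<bar> \<le> e" "\<bar>B - 1\<bar> \<le> e" "e \<le> 1" "A \<ge> 0" "B \<ge> 0"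
  shows "\<bar>sqrt A * sqrt B - 1\<bar> \<le> 3 * e"
proof -
  have "sqrt A * sqrt B = sqrt (A * B)" by (simp add: real_sqrt_mult)
  hence "\<bar>sqrt A * sqrt B - 1\<bar> \<le> \<bar>A * B - 1\<bar>" using sqrt_dev assms by simp
  also have "A * B - 1 = (A - 1) * B + (B - 1)" by (simp add: algebra_simps)
  also have "\<bar>(A - 1) * B + (B - 1)\<bar> \<le> \<bar>A - 1\<bar> * \<bar>B\<bar> + \<bar>B - 1\<bar>"
    by (metis abs_mult abs_triangle_ineq)
  also have "\<dots> \<le> e * 2 + e"
  proof -
    have "\<bar>B\<bar> \<le> 2" using assms by linarith
    hence "\<bar>A - 1\<bar> * \<bar>B\<bar> \<le> e * 2" using assms(1) by (intro mult_mono) auto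
    thus ?thesis using assms(2) by linarith
  qed
  finally show ?thesis by simp
qed

lemma abs_inner_le:
  fixes x y :: "nat \<Rightarrow> real"
  shows "(\<Sum>i\<in>I. \<bar>x i * y i\<bar>) \<le> ((\<Sum>i\<in>I. (x i)^2) + (\<Sum>i\<in>I. (y i)^2)) / 2"
proof -
  have "\<And>i. \<bar>x i * y i\<bar> \<le> ((x i)^2 + (y i)^2) / 2"
  proof -
    fix i
    have "0 \<le> (\<bar>x i\<bar> - \<bar>y i\<bar>)^2" by simp
    thus "\<bar>x i * y i\<bar> \<le> ((x i)^2 + (y i)^2) / 2"
      by (simp add: power2_eq_square abs_mult algebra_simps)
  qed
  hence "(\<Sum>i\<in>I. \<bar>x i * y i\<bar>) \<le> (\<Sum>i\<in>I. ((x i)^2 + (y i)^2) / 2)" by (rule sum_mono)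
  also have "\<dots> = ((\<Sum>i\<in>I. (x i)^2) + (\<Sum>i\<in>I. (y i)^2)) / 2"
    by (simp only: sum_divide_distrib[symmetric] sum.distrib)
  finally show ?thesis .
qed

lemma replica:
  assumes M1: "M \<ge> 1" and NM: "real N \<ge> 2 * real M * (2 * real M + 1)"
    and S: "(\<Sum>l=1..M. (w l)^2) = S" and Sd: "\<bar>S - real M\<bar> \<le> \<delta> * real M"
    and d0: "0 \<le> \<delta>" and d1: "\<delta> \<le> 1/2"
  shows "\<forall>l\<le>M+1. \<bar>AA M N w l - 1\<bar> \<le> 2 * real M * (2 * real M + 1) / real N"
    and "\<bar>AA M N w (M+1) - 1\<bar>
          \<le> (2 * real M * (2 * real M * (2 * real M + 1) / real N) + \<delta> * real M) / real N"
proof -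
  define \<eta> where "\<eta> = 2 * real M * (2 * real M + 1) / real N"
  have Npos: "real N > 0"
  proof -
    have "real M \<ge> 1" using M1 by simp
    hence "2 * real M * (2 * real M + 1) > 0" by simp
    thus ?thesis using NM by linarith
  qed
  have eta0: "\<eta> \<ge> 0" unfolding \<eta>_def using Npos by simp
  have S2: "S \<le> 2 * real M"
  proof -
    have "\<delta> * real M \<le> 1/2 * real M" using d1 by (intro mult_right_mono) auto
    thus ?thesis using Sd by linarith
  qed
  have xb: "\<forall>k\<in>{1..M}. (w k)^2 \<le> 2 * real M"
  proof
    fix k assume k: "k \<in> {1..M}"
    have "(w k)^2 \<le> (\<Sum>l=1..M. (w l)^2)"
      by (rule member_le_sum) (use k in auto)
    thus "(w k)^2 \<le> 2 * real M" using S S2 by linarith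
  qed
  show A: "\<forall>l\<le>M+1. \<bar>AA M N w l - 1\<bar> \<le> 2 * real M * (2 * real M + 1) / real N"
    using AA_bound[OF M1 NM xb] by blast
  have N1: "N \<ge> 1" using Npos by simp
  have sid: "(\<Sum>l=1..M. (w l)^2 * AA M N w l) + real N * AA M N w (M+1) = real (M+N)"
    using sphere_id[OF N1, of M M w] by simp
  have e1: "real N * (AA M N w (M+1) - 1) = (real M - S) + (\<Sum>l=1..M. (w l)^2 * (1 - AA M N w l))"
    using sid S by (simp add: algebra_simps sum_subtractf)
  have e2: "\<bar>\<Sum>l=1..M. (w l)^2 * (1 - AA M N w l)\<bar> \<le> (\<Sum>l=1..M. (w l)^2 * \<eta>)"
  proof -
    have "\<bar>\<Sum>l=1..M. (w l)^2 * (1 - AA M N w l)\<bar> \<le> (\<Sum>l=1..M. \<bar>(w l)^2 * (1 - AA M N w l)\<bar>)"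
      by (rule sum_abs)
    also have "\<dots> \<le> (\<Sum>l=1..M. (w l)^2 * \<eta>)"
    proof (rule sum_mono)
      fix l assume l: "l \<in> {1..M}"
      have "\<bar>1 - AA M N w l\<bar> \<le> \<eta>" using A l unfolding \<eta>_def by (simp add: abs_minus_commute)
      thus "\<bar>(w l)^2 * (1 - AA M N w l)\<bar> \<le> (w l)^2 * \<eta>"
        by (simp add: abs_mult mult_left_mono)
    qed
    finally show ?thesis .
  qed
  have e3: "(\<Sum>l=1..M. (w l)^2 * \<eta>) \<le> 2 * real M * \<eta>"
    using S S2 eta0 by (simp add: sum_distrib_right[symmetric] mult_right_mono)
  have "real N * \<bar>AA M N w (M+1) - 1\<bar> \<le> 2 * real M * \<eta> + \<delta> * real M"
  proof -
    have "real N * \<bar>AA M N w (M+1) - 1\<bar> = \<bar>(real M - S) + (\<Sum>l=1..M. (w l)^2 * (1 - AA M N w l))\<bar>"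
      using e1 Npos by (metis abs_mult abs_of_pos)
    also have "\<dots> \<le> \<bar>real M - S\<bar> + \<bar>\<Sum>l=1..M. (w l)^2 * (1 - AA M N w l)\<bar>" by (rule abs_triangle_ineq)
    finally show ?thesis using e2 e3 Sd by (simp add: abs_minus_commute)
  qed
  thus "\<bar>AA M N w (M+1) - 1\<bar>
          \<le> (2 * real M * (2 * real M * (2 * real M + 1) / real N) + \<delta> * real M) / real N"
    using Npos unfolding \<eta>_def[symmetric] by (simp add: field_simps)
qed


lemma final_ineq:
  fixes N M :: nat and eps \<delta> \<eta> \<alpha> P ss Qv :: real and tau tau' b :: "nat \<Rightarrow> real"
  assumes Npos: "N > 0" and M1: "M \<ge> 1"
    and ha: "\<bar>\<alpha> - 1\<bar> \<le> 3 * ((2 * real M * \<eta> + \<delta> * real M) / real N)"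
    and hb: "\<forall>l\<in>{1..M}. \<bar>b l - 1\<bar> \<le> 3 * \<eta>"
    and hP: "\<bar>P - real N * Qv\<bar> \<le> real N * eps" and hP1: "\<bar>P\<bar> \<le> real N"
    and hT: "\<bar>(\<Sum>l=1..M. tau l * tau' l) - real M * Qv\<bar> \<le> real M * (eps/2)"
    and hT1: "(\<Sum>l=1..M. \<bar>tau l * tau' l\<bar>) \<le> real M"
    and hs: "\<bar>ss - 1\<bar> \<le> \<delta>" and d0: "0 \<le> \<delta>" and d1: "\<delta> \<le> 1/2" and eta0: "0 \<le> \<eta>"
    and key: "12 * \<eta> + 4 * \<delta> \<le> eps/2"
  shows "\<bar>1 / real (M+N) * (\<alpha> * P + (\<Sum>l=1..M. ss * (tau l * tau' l) * b l)) - Qv\<bar> \<le> eps"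
proof -
  define T where "T = (\<Sum>l=1..M. tau l * tau' l)"
  define E where "E = (\<Sum>l=1..M. tau l * tau' l * (b l - 1))"
  have sumeq: "(\<Sum>l=1..M. ss * (tau l * tau' l) * b l) = ss * (T + E)"
    unfolding T_def E_def by (simp add: sum_distrib_left sum.distrib[symmetric] algebra_simps)
  have hE: "\<bar>E\<bar> \<le> 3 * \<eta> * real M"
  proof -
    have "\<bar>E\<bar> \<le> (\<Sum>l=1..M. \<bar>tau l * tau' l * (b l - 1)\<bar>)" unfolding E_def by (rule sum_abs)
    also have "\<dots> \<le> (\<Sum>l=1..M. \<bar>tau l * tau' l\<bar> * (3 * \<eta>))"
    proof (rule sum_mono)
      fix l assume "l \<in> {1..M}"
      hence "\<bar>b l - 1\<bar> \<le> 3 * \<eta>" using hb by auto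
      thus "\<bar>tau l * tau' l * (b l - 1)\<bar> \<le> \<bar>tau l * tau' l\<bar> * (3 * \<eta>)"
        by (simp only: abs_mult[of "tau l * tau' l"]) (intro mult_left_mono, auto)
    qed
    also have "\<dots> = (\<Sum>l=1..M. \<bar>tau l * tau' l\<bar>) * (3 * \<eta>)" by (simp add: sum_distrib_right)
    also have "\<dots> \<le> real M * (3 * \<eta>)" using hT1 eta0 by (intro mult_right_mono) auto
    finally show ?thesis by (simp add: mult.commute)
  qed
  have hT2: "\<bar>T\<bar> \<le> real M"
    unfolding T_def using sum_abs[of "\<lambda>l. tau l * tau' l" "{1..M}"] hT1 by linarith
  define X where "X = \<alpha> * P + ss * (T + E) - real (M+N) * Qv"
  have Xeq: "X = (P - real N * Qv) + (\<alpha> - 1) * P + (T - real M * Qv) + (ss - 1) * T + ss * E"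
    unfolding X_def by (simp add: algebra_simps)
  have b1: "\<bar>(\<alpha> - 1) * P\<bar> \<le> 3 * (2 * real M * \<eta> + \<delta> * real M)"
  proof -
    have "\<bar>(\<alpha> - 1) * P\<bar> \<le> 3 * ((2 * real M * \<eta> + \<delta> * real M) / real N) * real N"
      unfolding abs_mult using ha hP1 by (intro mult_mono) auto
    thus ?thesis using Npos by simp
  qed
  have b2: "\<bar>(ss - 1) * T\<bar> \<le> \<delta> * real M"
    unfolding abs_mult using hs hT2 d0 by (intro mult_mono) auto
  have b3: "\<bar>ss * E\<bar> \<le> 2 * (3 * \<eta> * real M)"
  proof -
    have "\<bar>ss\<bar> \<le> 2" using hs d1 by linarith
    thus ?thesis unfolding abs_mult using hE by (intro mult_mono) auto
  qed
  have hT': "\<bar>T - real M * Qv\<bar> \<le> real M * (eps/2)" using hT unfolding T_def .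
  have "\<bar>X\<bar> \<le> real N * eps + 3 * (2 * real M * \<eta> + \<delta> * real M) + real M * (eps/2)
               + \<delta> * real M + 2 * (3 * \<eta> * real M)"
    unfolding Xeq using hP b1 b2 b3 hT' by (smt (verit, best) abs_triangle_ineq)
  also have "\<dots> = real N * eps + real M * (12 * \<eta> + 4 * \<delta>) + real M * (eps/2)"
    by (simp add: algebra_simps)
  also have "\<dots> \<le> real N * eps + real M * (eps/2) + real M * (eps/2)"
  proof -
    have "real M * (12 * \<eta> + 4 * \<delta>) \<le> real M * (eps/2)" using key by (intro mult_left_mono) auto
    thus ?thesis by linarith
  qed
  also have "\<dots> = real (M+N) * eps" by (simp add: algebra_simps)
  finally have hX: "\<bar>X\<bar> \<le> real (M+N) * eps" .
  have Dpos: "real (M+N) > 0" using Npos by simp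
  have "1 / real (M+N) * (\<alpha> * P + (\<Sum>l=1..M. ss * (tau l * tau' l) * b l)) - Qv = X / real (M+N)"
    unfolding sumeq X_def using Dpos by (simp add: field_simps)
  also have "\<bar>X / real (M+N)\<bar> \<le> eps"
    using hX Dpos by (simp add: abs_divide field_simps)
  finally show ?thesis .
qed


theorem lemma10:
  fixes n M :: nat and Q :: "nat \<Rightarrow> nat \<Rightarrow> real"
  assumes "n \<ge> 1" and "M \<ge> 1"
    and Q_sym: "\<forall>j\<in>{1..n}. \<forall>j'\<in>{1..n}. Q j j' = Q j' j"
    and Q_psd: "\<forall>v :: nat \<Rightarrow> real. 0 \<le> (\<Sum>j=1..n. \<Sum>j'=1..n. v j * Q j j' * v j')"
    and Q_diag: "\<forall>j\<in>{1..n}. Q j j = 1"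
  shows "\<forall>eps > 0. \<exists>N0. \<forall>N \<ge> N0. \<exists>\<delta>. 0 < \<delta> \<and> \<delta> < eps \<and>
           (\<forall>\<sigma> \<omega>. (\<forall>j\<in>{1..n}. on_sphere N (\<sigma> j)) \<and> Psi_defined M N n \<omega> \<longrightarrow>
              (indicator (Qset (M + N) n Q eps) (Psi M N \<sigma> \<omega>) :: real)
                \<ge> indicator (Qset N n Q eps) \<sigma> * indicator (Omega_set M n Q (eps / 2) \<delta>) \<omega>)"
proof (intro allI impI)
  fix eps :: real assume eps: "eps > 0"
  have M1: "M \<ge> 1" by fact
  define C where "C = 2 * real M * (2 * real M + 1)"
  have C0: "C > 0" unfolding C_def using M1 by simp
  define \<delta> where "\<delta> = min (eps/16) (1/2)"
  define N0 where "N0 = nat \<lceil>48 * C / eps\<rceil> + nat \<lceil>C\<rceil> + 1"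
  show "\<exists>N0. \<forall>N \<ge> N0. \<exists>\<delta>. 0 < \<delta> \<and> \<delta> < eps \<and>
           (\<forall>\<sigma> \<omega>. (\<forall>j\<in>{1..n}. on_sphere N (\<sigma> j)) \<and> Psi_defined M N n \<omega> \<longrightarrow>
              (indicator (Qset (M + N) n Q eps) (Psi M N \<sigma> \<omega>) :: real)
                \<ge> indicator (Qset N n Q eps) \<sigma> * indicator (Omega_set M n Q (eps / 2) \<delta>) \<omega>)"
  proof (intro exI allI impI)
    fix N assume NN0: "N0 \<le> N"
    have NC1: "real N \<ge> 48 * C / eps"
    proof -
      have "48 * C / eps \<le> real (nat \<lceil>48 * C / eps\<rceil>)" by linarith
      thus ?thesis using NN0 unfolding N0_def by linarith
    qed
    have NC2: "real N \<ge> C"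
    proof -
      have "C \<le> real (nat \<lceil>C\<rceil>)" by linarith
      thus ?thesis using NN0 unfolding N0_def by linarith
    qed
    have Npos: "N > 0" using NC2 C0 by (metis not_gr_zero of_nat_0 not_le)
    have NM: "real N \<ge> 2 * real M * (2 * real M + 1)" using NC2 unfolding C_def .
    define \<eta> where "\<eta> = C / real N"
    have eta0: "\<eta> \<ge> 0" unfolding \<eta>_def using C0 by simp
    have eta1: "\<eta> \<le> 1" unfolding \<eta>_def using NC2 Npos by simp
    have eta2: "\<eta> \<le> eps / 48" unfolding \<eta>_def using NC1 Npos eps by (simp add: field_simps)
    have d0: "0 < \<delta>" "\<delta> < eps" "\<delta> \<le> 1/2" "\<delta> \<le> eps/16" using eps unfolding \<delta>_def by auto
    have key: "12 * \<eta> + 4 * \<delta> \<le> eps/2" using eta2 d0 by linarith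
    show "0 < \<delta> \<and> \<delta> < eps \<and>
           (\<forall>\<sigma> \<omega>. (\<forall>j\<in>{1..n}. on_sphere N (\<sigma> j)) \<and> Psi_defined M N n \<omega> \<longrightarrow>
              (indicator (Qset (M + N) n Q eps) (Psi M N \<sigma> \<omega>) :: real)
                \<ge> indicator (Qset N n Q eps) \<sigma> * indicator (Omega_set M n Q (eps / 2) \<delta>) \<omega>)"
    proof (intro conjI allI impI)
      show "0 < \<delta>" "\<delta> < eps" using d0 by auto
      fix \<sigma> \<omega> :: "nat \<Rightarrow> nat \<Rightarrow> real"
      show "(indicator (Qset (M + N) n Q eps) (Psi M N \<sigma> \<omega>) :: real)
                \<ge> indicator (Qset N n Q eps) \<sigma> * indicator (Omega_set M n Q (eps / 2) \<delta>) \<omega>"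
      proof (cases "\<sigma> \<in> Qset N n Q eps \<and> \<omega> \<in> Omega_set M n Q (eps / 2) \<delta>")
        case False
        thus ?thesis by (auto simp: indicator_def)
      next
        case True
        then obtain s \<tau> where tau: "\<tau> \<in> Qset M n Q (eps/2)"
          and sw: "\<forall>j\<in>{1..n}. s j \<in> {sqrt (1 - \<delta>)..sqrt (1 + \<delta>)} \<and> (\<forall>i\<in>{1..M}. \<omega> j i = s j * \<tau> j i)"
          unfolding Omega_set_def by blast
        have sig: "\<sigma> \<in> Qset N n Q eps" using True by blast
        have sph_sig: "\<And>j. j \<in> {1..n} \<Longrightarrow> (\<Sum>i=1..N. (\<sigma> j i)^2) = real N"
          using sig unfolding Qset_def on_sphere_def by blast
        have sph_tau: "\<And>j. j \<in> {1..n} \<Longrightarrow> (\<Sum>i=1..M. (\<tau> j i)^2) = real M"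
          using tau unfolding Qset_def on_sphere_def by blast
        have ov_sig: "\<And>j j'. j \<in> {1..n} \<Longrightarrow> j' \<in> {1..n} \<Longrightarrow> \<bar>overlap N \<sigma> \<sigma> j j' - Q j j'\<bar> \<le> eps"
          using sig unfolding Qset_def by blast
        have ov_tau: "\<And>j j'. j \<in> {1..n} \<Longrightarrow> j' \<in> {1..n} \<Longrightarrow> \<bar>overlap M \<tau> \<tau> j j' - Q j j'\<bar> \<le> eps/2"
          using tau unfolding Qset_def by blast
        have s2: "\<And>j. j \<in> {1..n} \<Longrightarrow> 1 - \<delta> \<le> (s j)^2 \<and> (s j)^2 \<le> 1 + \<delta> \<and> 0 \<le> s j"
        proof -
          fix j assume j: "j \<in> {1..n}"
          have a: "sqrt (1 - \<delta>) \<le> s j" "s j \<le> sqrt (1 + \<delta>)" using sw j by auto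
          have p: "0 \<le> sqrt (1 - \<delta>)" using d0 by simp
          have "(sqrt (1 - \<delta>))^2 \<le> (s j)^2" using a p by (intro power_mono) auto
          moreover have s0: "0 \<le> s j" using a(1) p by linarith
          moreover have "(s j)^2 \<le> (sqrt (1 + \<delta>))^2" using a s0 by (intro power_mono) auto
          ultimately show "1 - \<delta> \<le> (s j)^2 \<and> (s j)^2 \<le> 1 + \<delta> \<and> 0 \<le> s j" using d0 by simp
        qed
        have wS: "\<And>j. j \<in> {1..n} \<Longrightarrow> (\<Sum>l=1..M. (\<omega> j l)^2) = (s j)^2 * real M"
        proof -
          fix j assume j: "j \<in> {1..n}"
          have "(\<Sum>l=1..M. (\<omega> j l)^2) = (\<Sum>l=1..M. (s j)^2 * (\<tau> j l)^2)"
            using sw j by (intro sum.cong) (auto simp: power_mult_distrib)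
          also have "\<dots> = (s j)^2 * real M" using sph_tau[OF j] by (simp add: sum_distrib_left[symmetric])
          finally show "(\<Sum>l=1..M. (\<omega> j l)^2) = (s j)^2 * real M" .
        qed
        have Sd: "\<And>j. j \<in> {1..n} \<Longrightarrow> \<bar>(s j)^2 * real M - real M\<bar> \<le> \<delta> * real M"
        proof -
          fix j assume j: "j \<in> {1..n}"
          have "\<bar>(s j)^2 - 1\<bar> \<le> \<delta>" using s2[OF j] by linarith
          hence "\<bar>(s j)^2 - 1\<bar> * real M \<le> \<delta> * real M" by (intro mult_right_mono) auto
          thus "\<bar>(s j)^2 * real M - real M\<bar> \<le> \<delta> * real M"
          proof -
            have "(s j)^2 * real M - real M = ((s j)^2 - 1) * real M" by (simp add: algebra_simps)
            hence "\<bar>(s j)^2 * real M - real M\<bar> = \<bar>(s j)^2 - 1\<bar> * real M" by (simp add: abs_mult)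
            thus ?thesis using \<open>\<bar>(s j)^2 - 1\<bar> * real M \<le> \<delta> * real M\<close> by simp
          qed
        qed
        have AB: "\<And>j l. j \<in> {1..n} \<Longrightarrow> l \<le> M+1 \<Longrightarrow> \<bar>AA M N (\<omega> j) l - 1\<bar> \<le> \<eta>"
          using replica(1)[OF M1 NM wS Sd] d0 unfolding \<eta>_def C_def by auto
        have AB2: "\<And>j. j \<in> {1..n} \<Longrightarrow> \<bar>AA M N (\<omega> j) (M+1) - 1\<bar> \<le> (2 * real M * \<eta> + \<delta> * real M) / real N"
          using replica(2)[OF M1 NM wS Sd] d0 unfolding \<eta>_def C_def by auto
        have A0: "\<And>j l. j \<in> {1..n} \<Longrightarrow> l \<le> M+1 \<Longrightarrow> AA M N (\<omega> j) l \<ge> 0"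
        proof -
          fix j l assume "j \<in> {1..n}" "l \<le> M+1"
          from AB[OF this] eta1 show "AA M N (\<omega> j) l \<ge> 0" by linarith
        qed
        have gam1: "(2 * real M * \<eta> + \<delta> * real M) / real N \<le> 1"
        proof -
          have m1: "real M \<ge> 1" using M1 by simp
          have "2 * real M * \<eta> \<le> 2 * real M * 1" using eta1 by (intro mult_left_mono) auto
          moreover have "\<delta> * real M \<le> 1 * real M" using d0 by (intro mult_right_mono) auto
          ultimately have "2 * real M * \<eta> + \<delta> * real M \<le> 2 * real M + real M" by linarith
          also have "\<dots> \<le> 2 * real M * (2 * real M + 1)"
          proof -
            have "2 * real M * 3 \<le> 2 * real M * (2 * real M + 1)" using m1 by (intro mult_left_mono) auto
            thus ?thesis by simp
          qed
          also have "\<dots> \<le> real N" using NM .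
          finally show ?thesis using Npos by simp
        qed
        show ?thesis
        proof -
          have "Psi M N \<sigma> \<omega> \<in> Qset (M + N) n Q eps"
            unfolding Qset_def
          proof (intro CollectI conjI ballI)
            fix j assume j: "j \<in> {1..n}"
            have "(\<Sum>i=1..M+N. (Psi M N \<sigma> \<omega> j i)^2)
                = a_fun M N (\<omega> j) (M+1) * a_fun M N (\<omega> j) (M+1) * (\<Sum>i=1..N. \<sigma> j i * \<sigma> j i)
                  + (\<Sum>l=1..M. \<omega> j l * \<omega> j l * (a_fun M N (\<omega> j) l * a_fun M N (\<omega> j) l))"
              unfolding Psi_def power2_eq_square by (rule inner_split)
            also have "\<dots> = AA M N (\<omega> j) (M+1) * real N + (\<Sum>l=1..M. (\<omega> j l)^2 * AA M N (\<omega> j) l)"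
            proof -
              have "(\<Sum>i=1..N. \<sigma> j i * \<sigma> j i) = real N" using sph_sig[OF j] by (simp add: power2_eq_square)
              moreover have "a_fun M N (\<omega> j) (M+1) * a_fun M N (\<omega> j) (M+1) = AA M N (\<omega> j) (M+1)"
                using A0[OF j, of "M+1"] by (simp add: a_fun_AA)
              moreover have "(\<Sum>l=1..M. \<omega> j l * \<omega> j l * (a_fun M N (\<omega> j) l * a_fun M N (\<omega> j) l))
                  = (\<Sum>l=1..M. (\<omega> j l)^2 * AA M N (\<omega> j) l)"
                using A0[OF j] by (intro sum.cong) (auto simp: a_fun_AA power2_eq_square)
              ultimately show ?thesis by simp
            qed
            also have "\<dots> = real (M+N)"
              using sphere_id[of N M M "\<omega> j"] Npos by (simp add: algebra_simps)
            finally show "on_sphere (M + N) (Psi M N \<sigma> \<omega> j)" unfolding on_sphere_def .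
          next
            fix j j' assume j: "j \<in> {1..n}" and j': "j' \<in> {1..n}"
            have ov: "overlap (M+N) (Psi M N \<sigma> \<omega>) (Psi M N \<sigma> \<omega>) j j'
               = 1 / real (M+N) * ((a_fun M N (\<omega> j) (M+1) * a_fun M N (\<omega> j') (M+1)) * (\<Sum>i=1..N. \<sigma> j i * \<sigma> j' i)
                  + (\<Sum>l=1..M. (s j * s j') * (\<tau> j l * \<tau> j' l) * (a_fun M N (\<omega> j) l * a_fun M N (\<omega> j') l)))"
            proof -
              have "(\<Sum>l=1..M. \<omega> j l * \<omega> j' l * (a_fun M N (\<omega> j) l * a_fun M N (\<omega> j') l))
                  = (\<Sum>l=1..M. (s j * s j') * (\<tau> j l * \<tau> j' l) * (a_fun M N (\<omega> j) l * a_fun M N (\<omega> j') l))"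
                using sw j j' by (intro sum.cong) auto
              thus ?thesis unfolding overlap_def Psi_def inner_split by simp
            qed
            show "\<bar>overlap (M+N) (Psi M N \<sigma> \<omega>) (Psi M N \<sigma> \<omega>) j j' - Q j j'\<bar> \<le> eps"
              unfolding ov
            proof (rule final_ineq[where \<eta> = \<eta> and \<delta> = \<delta>])
              show "N > 0" "M \<ge> 1" by fact+
              show "\<bar>a_fun M N (\<omega> j) (M+1) * a_fun M N (\<omega> j') (M+1) - 1\<bar>
                    \<le> 3 * ((2 * real M * \<eta> + \<delta> * real M) / real N)"
                unfolding a_fun_AA using AB2[OF j] AB2[OF j'] gam1 A0[OF j, of "M+1"] A0[OF j', of "M+1"]
                by (intro sqrt_pair_dev) auto
              show "\<forall>l\<in>{1..M}. \<bar>a_fun M N (\<omega> j) l * a_fun M N (\<omega> j') l - 1\<bar> \<le> 3 * \<eta>"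
                unfolding a_fun_AA using AB[OF j] AB[OF j'] eta1 A0[OF j] A0[OF j']
                by (intro ballI sqrt_pair_dev) auto
              have ovs: "\<bar>1 / real N * (\<Sum>i=1..N. \<sigma> j i * \<sigma> j' i) - Q j j'\<bar> \<le> eps"
                using ov_sig[OF j j'] unfolding overlap_def .
              have "\<bar>real N * (1 / real N * (\<Sum>i=1..N. \<sigma> j i * \<sigma> j' i) - Q j j')\<bar> \<le> real N * eps"
                using ovs by (simp add: abs_mult mult_left_mono)
              thus "\<bar>(\<Sum>i=1..N. \<sigma> j i * \<sigma> j' i) - real N * Q j j'\<bar> \<le> real N * eps"
                using Npos by (simp add: algebra_simps)
              have "\<bar>\<Sum>i=1..N. \<sigma> j i * \<sigma> j' i\<bar> \<le> (\<Sum>i=1..N. \<bar>\<sigma> j i * \<sigma> j' i\<bar>)" by (rule sum_abs)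
              also have "\<dots> \<le> real N" using abs_inner_le[of "\<sigma> j" "\<sigma> j'" "{1..N}"] sph_sig[OF j] sph_sig[OF j'] by simp
              finally show "\<bar>\<Sum>i=1..N. \<sigma> j i * \<sigma> j' i\<bar> \<le> real N" .
              have ovt: "\<bar>1 / real M * (\<Sum>i=1..M. \<tau> j i * \<tau> j' i) - Q j j'\<bar> \<le> eps/2"
                using ov_tau[OF j j'] unfolding overlap_def .
              have "\<bar>real M * (1 / real M * (\<Sum>i=1..M. \<tau> j i * \<tau> j' i) - Q j j')\<bar> \<le> real M * (eps/2)"
                unfolding abs_mult abs_of_nat using ovt by (intro mult_left_mono) auto
              thus "\<bar>(\<Sum>l=1..M. \<tau> j l * \<tau> j' l) - real M * Q j j'\<bar> \<le> real M * (eps/2)"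
                using M1 by (simp add: algebra_simps)
              show "(\<Sum>l=1..M. \<bar>\<tau> j l * \<tau> j' l\<bar>) \<le> real M"
                using abs_inner_le[of "\<tau> j" "\<tau> j'" "{1..M}"] sph_tau[OF j] sph_tau[OF j'] by simp
              show "\<bar>s j * s j' - 1\<bar> \<le> \<delta>"
              proof -
                have a: "1 - \<delta> \<le> (s j)^2" "(s j)^2 \<le> 1 + \<delta>" "0 \<le> s j" using s2[OF j] by auto
                have b: "1 - \<delta> \<le> (s j')^2" "(s j')^2 \<le> 1 + \<delta>" "0 \<le> s j'" using s2[OF j'] by auto
                have "((s j * s j'))^2 = (s j)^2 * (s j')^2" by (simp add: power_mult_distrib)
                have lo: "(1 - \<delta>)^2 \<le> (s j * s j')^2" unfolding power_mult_distrib
                  using a b d0 by (simp add: power2_eq_square mult_mono)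
                have hi: "(s j * s j')^2 \<le> (1 + \<delta>)^2" unfolding power_mult_distrib
                  using a b d0 by (simp add: power2_eq_square mult_mono)
                have p: "0 \<le> s j * s j'" using a b by simp
                have "1 - \<delta> \<le> s j * s j'" using power2_le_imp_le[OF lo p] .
                moreover have "s j * s j' \<le> 1 + \<delta>" using power2_le_imp_le[OF hi] d0 by simp
                ultimately show ?thesis by linarith
              qed
              show "0 \<le> \<delta>" "\<delta> \<le> 1/2" "0 \<le> \<eta>" using d0 eta0 by auto
              show "12 * \<eta> + 4 * \<delta> \<le> eps/2" by (rule key)
            qed
          qed
          thus ?thesis by (simp add: indicator_def)
        qed
      qed
    qed
  qed
qed

end
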